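(* Let $\eta>0$ and let $\mathcal{H}$ be the Paley-Wiener space on $\mathbb{R}^d$ with parameter $\eta$ (functions in $\mathcal{L}^2(\mathbb{R}^d)$ whose Fourier transform is supported in $[-\eta,\eta]^d$), and let $f_*\in\mathcal{H}$. Let $K\ge 2$, $\gamma\in(0,1)$, and let $C_1,\dots,C_K\subseteq\mathcal{H}$ be random confidence regions such that $\mathbb{P}(f_*\in C_k)\ge 1-\gamma$ for every $k\in\{1,\dots,K\}$. For each $k$ and each $x\in\mathbb{R}^d$ let $$I_1^{(k)}(x)=\min_{f\in C_k} f(x),\qquad I_2^{(k)}(x)=\max_{f\in C_k} f(x)$$ (assumed to exist). Let $w=(w_1,\dots,w_K)\in[0,1]^K$ with $\sum_{k=1}^K w_k=1$ be fixed weights, and for each $x_0\in\mathbb{R}^d$ define the per-input majority-vote set $$\mathcal{C}(w,1/2,x_0)\doteq\Big\{y\in\mathbb{R}:\ \sum_{k=1}^K w_k\,\mathbb{I}\big(y\in[I_1^{(k)}(x_0),I_2^{(k)}(x_0)]\big)>1/2\Big\}.$$ Then the resulting band has simultaneous coverage: $$\mathbb{P}\big(\forall x_0\in\mathbb{R}^d:\ f_*(x_0)\in\mathcal{C}(w,1/2,x_0)\big)\ge 1-2\gamma.$$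
   Context: In the paper, $C_k$ is the Paley-Wiener kernel-based confidence region for the unknown regression function $f_*$ built from the $k$-th random subsample (random permutation) of an i.i.d. input-output sample, with $\gamma=\alpha+\beta$; $[I_1^{(k)}(x),I_2^{(k)}(x)]$ is the resulting confidence interval for $f_*(x)$ at query input $x$. $\mathbb{I}$ denotes the indicator function. The case of equal weights $w_k=1/K$ is the standard majority vote. *)

theory Defs
  imports "HOL-Probability.Probability"
begin

definition freq_cube :: "real \<Rightarrow> (real^'d) set" where
  "freq_cube \<eta> = {\<omega>. \<forall>i. \<bar>\<omega> $ i\<bar> \<le> \<eta>}"

text \<open>Paley-Wiener space: real-valued square-integrable functions on R^d whose
  Fourier transform is supported in [-eta,eta]^d, i.e. (continuous representatives)
  inverse Fourier transforms of L2 functions on the cube (normalising constants are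
  absorbed into g).\<close>
definition paley_wiener :: "real \<Rightarrow> ((real^'d) \<Rightarrow> real) set" where
  "paley_wiener \<eta> = {f. f \<in> borel_measurable lborel \<and> integrable lborel (\<lambda>x. (f x)\<^sup>2) \<and>
     (\<exists>g :: real^'d \<Rightarrow> complex. g \<in> borel_measurable lborel \<and>
        set_integrable lborel (freq_cube \<eta>) (\<lambda>\<omega>. (norm (g \<omega>))\<^sup>2) \<and>
        (\<forall>x. complex_of_real (f x) =
           set_lebesgue_integral lborel (freq_cube \<eta>)
             (\<lambda>\<omega>. g \<omega> * exp (\<i> * complex_of_real (\<omega> \<bullet> x)))))}"

definition vote_set :: "nat \<Rightarrow> (nat \<Rightarrow> real) \<Rightarrow> real \<Rightarrow> (nat \<Rightarrow> real) \<Rightarrow> (nat \<Rightarrow> real) \<Rightarrow> real set" where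
  "vote_set K w \<tau> I1 I2 = {y. (\<Sum>k=1..K. w k * indicator {I1 k..I2 k} y) > \<tau>}"

end

theory Submission
  imports Defs
begin

theorem mainTheorem2:
  fixes M :: "'o measure" and \<eta> \<gamma> :: real and K :: nat
    and fstar :: "real^'d \<Rightarrow> real"
    and C :: "nat \<Rightarrow> 'o \<Rightarrow> (real^'d \<Rightarrow> real) set"
    and w :: "nat \<Rightarrow> real"
  assumes "prob_space M"
    and "\<eta> > 0"
    and "fstar \<in> paley_wiener \<eta>"
    and "K \<ge> 2"
    and "0 < \<gamma>" and "\<gamma> < 1"
    and "\<forall>k\<in>{1..K}. \<forall>\<omega>\<in>space M. C k \<omega> \<subseteq> paley_wiener \<eta>"
    and "\<forall>k\<in>{1..K}. {\<omega>\<in>space M. fstar \<in> C k \<omega>} \<in> sets M"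
    and "\<forall>k\<in>{1..K}. measure M {\<omega>\<in>space M. fstar \<in> C k \<omega>} \<ge> 1 - \<gamma>"
    and "\<forall>k\<in>{1..K}. \<forall>\<omega>\<in>space M. \<forall>x. \<exists>f\<in>C k \<omega>. \<forall>g\<in>C k \<omega>. f x \<le> g x"
    and "\<forall>k\<in>{1..K}. \<forall>\<omega>\<in>space M. \<forall>x. \<exists>f\<in>C k \<omega>. \<forall>g\<in>C k \<omega>. g x \<le> f x"
    and "\<forall>k\<in>{1..K}. w k \<in> {0..1}"
    and "(\<Sum>k=1..K. w k) = 1"
    and "{\<omega>\<in>space M. \<forall>x0. fstar x0 \<in> vote_set K w (1/2)
            (\<lambda>k. Inf ((\<lambda>f. f x0) ` C k \<omega>)) (\<lambda>k. Sup ((\<lambda>f. f x0) ` C k \<omega>))} \<in> sets M"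
  shows "measure M {\<omega>\<in>space M. \<forall>x0. fstar x0 \<in> vote_set K w (1/2)
            (\<lambda>k. Inf ((\<lambda>f. f x0) ` C k \<omega>)) (\<lambda>k. Sup ((\<lambda>f. f x0) ` C k \<omega>))} \<ge> 1 - 2 * \<gamma>"
proof -
  interpret prob_space M by (rule assms(1))
  define E where "E = {\<omega>\<in>space M. \<forall>x0. fstar x0 \<in> vote_set K w (1/2)
            (\<lambda>k. Inf ((\<lambda>f. f x0) ` C k \<omega>)) (\<lambda>k. Sup ((\<lambda>f. f x0) ` C k \<omega>))}"
  define A where "A k = {\<omega>\<in>space M. fstar \<in> C k \<omega>}" for k
  define Z where "Z \<omega> = (\<Sum>k=1..K. w k * indicator (A k) \<omega>)" for \<omega>
  define B where "B = {\<omega>\<in>space M. Z \<omega> > 1/2}"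
  have Asets: "A k \<in> sets M" if "k \<in> {1..K}" for k
    using assms(8) that unfolding A_def by blast
  have w0: "w k \<ge> 0" if "k \<in> {1..K}" for k using assms(12) that by auto
  have Zmeas: "Z \<in> borel_measurable M"
    unfolding Z_def using Asets by (intro borel_measurable_sum) auto
  have Bsets: "B \<in> sets M" unfolding B_def using Zmeas by measurable
  have Zint: "integrable M Z"
    unfolding Z_def using Asets by (intro Bochner_Integration.integrable_sum integrable_mult_right) (auto simp: integrable_indicator_iff less_top[symmetric])
  have Zle1: "Z \<omega> \<le> 1" for \<omega>
  proof -
    have "Z \<omega> \<le> (\<Sum>k=1..K. w k)" unfolding Z_def
      by (intro sum_mono) (use w0 in \<open>auto simp: indicator_def\<close>)
    then show ?thesis using assms(13) by simp
  qed
  have intZ: "integral\<^sup>L M Z = (\<Sum>k=1..K. w k * prob (A k))"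
    unfolding Z_def using Asets by (subst Bochner_Integration.integral_sum) (auto simp: integrable_indicator_iff less_top[symmetric])
  have "(\<Sum>k=1..K. w k * (1 - \<gamma>)) \<le> (\<Sum>k=1..K. w k * prob (A k))"
    using w0 assms(9) unfolding A_def by (intro sum_mono mult_left_mono) auto
  also have "(\<Sum>k=1..K. w k * (1 - \<gamma>)) = 1 - \<gamma>"
    using assms(13) by (simp add: sum_distrib_right[symmetric])
  finally have lo: "1 - \<gamma> \<le> integral\<^sup>L M Z" using intZ by simp
  have "integral\<^sup>L M Z \<le> integral\<^sup>L M (\<lambda>\<omega>. 1/2 + 1/2 * indicator B \<omega>)"
  proof (rule integral_mono)
    show "integrable M (\<lambda>\<omega>. 1/2 + 1/2 * indicator B \<omega> :: real)"
      using Bsets by (intro Bochner_Integration.integrable_add integrable_mult_right) (auto simp: integrable_indicator_iff less_top[symmetric])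
    show "Z \<omega> \<le> 1/2 + 1/2 * indicator B \<omega>" if "\<omega> \<in> space M" for \<omega>
      using Zle1[of \<omega>] that unfolding B_def by (auto simp: indicator_def)
  qed (rule Zint)
  also have "\<dots> = 1/2 + 1/2 * prob B"
    using Bsets by (subst Bochner_Integration.integral_add) (auto simp: integrable_indicator_iff less_top[symmetric] prob_space)
  finally have pB: "1 - 2 * \<gamma> \<le> prob B" using lo by simp
  have "B \<subseteq> E"
  proof
    fix \<omega> assume "\<omega> \<in> B"
    then have om: "\<omega> \<in> space M" and Zg: "Z \<omega> > 1/2" unfolding B_def by auto
    have "fstar x0 \<in> vote_set K w (1/2)
            (\<lambda>k. Inf ((\<lambda>f. f x0) ` C k \<omega>)) (\<lambda>k. Sup ((\<lambda>f. f x0) ` C k \<omega>))" for x0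
    proof -
      have "Z \<omega> \<le> (\<Sum>k=1..K. w k * indicator {Inf ((\<lambda>f. f x0) ` C k \<omega>)..Sup ((\<lambda>f. f x0) ` C k \<omega>)} (fstar x0))"
        unfolding Z_def
      proof (intro sum_mono)
        fix k assume k: "k \<in> {1..K}"
        show "w k * indicator (A k) \<omega> \<le> w k * indicator {Inf ((\<lambda>f. f x0) ` C k \<omega>)..Sup ((\<lambda>f. f x0) ` C k \<omega>)} (fstar x0)"
        proof (cases "\<omega> \<in> A k")
          case True
          then have fin: "fstar \<in> C k \<omega>" unfolding A_def by auto
          obtain f1 where "\<forall>g\<in>C k \<omega>. f1 x0 \<le> g x0" using assms(10) k om by blast
          then have bb: "bdd_below ((\<lambda>f. f x0) ` C k \<omega>)" by (auto intro!: bdd_belowI)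
          obtain f2 where "\<forall>g\<in>C k \<omega>. g x0 \<le> f2 x0" using assms(11) k om by blast
          then have ba: "bdd_above ((\<lambda>f. f x0) ` C k \<omega>)" by (auto intro!: bdd_aboveI)
          have "Inf ((\<lambda>f. f x0) ` C k \<omega>) \<le> fstar x0" using bb fin by (intro cInf_lower) auto
          moreover have "fstar x0 \<le> Sup ((\<lambda>f. f x0) ` C k \<omega>)" using ba fin by (intro cSup_upper) auto
          ultimately show ?thesis using True by auto
        next
          case False
          then show ?thesis using w0[OF k] by (auto simp: indicator_def)
        qed
      qed
      then show ?thesis using Zg unfolding vote_set_def by auto
    qed
    then show "\<omega> \<in> E" unfolding E_def using om by auto
  qed
  then have "prob B \<le> prob E" using assms(14) unfolding E_def by (intro finite_measure_mono) auto
  then show ?thesis using pB unfolding E_def by simp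
qed

end
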